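(* Let $\mathscr{H}$ be a complex Hilbert space, $N(\cdot)$ a norm on $\mathbb{B}(\mathscr{H})$, and $B,C\in\mathbb{B}(\mathscr{H})$. Then $$\frac{1}{\sqrt2}\max\{w_N(B+C),w_N(B-C)\}\leq w_{(N,e)}(B,C)\leq\frac{1}{\sqrt2}\sqrt{w_N^2(B+C)+w_N^2(B-C)}.$$
   Context: For $T\in\mathbb{B}(\mathscr{H})$: $\Re(T)=\frac12(T+T^* )$ and $w_N(T)=\sup_{\theta\in\mathbb{R}}N(\Re(e^{i\theta}T))$. For $B,C\in\mathbb{B}(\mathscr{H})$, $w_{(N,e)}(B,C)=\sup_{\lambda_1,\lambda_2\in\mathbb{C},\ |\lambda_1|^2+|\lambda_2|^2\leq 1}\sup_{\theta\in\mathbb{R}} N(\Re(e^{i\theta}(\lambda_1B+\lambda_2C)))$. *)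

theory Defs
  imports Complex_Main
begin

class complex_vector = real_vector +
  fixes scaleC :: "complex \<Rightarrow> 'a \<Rightarrow> 'a"
  assumes scaleC_add_right: "scaleC a (x + y) = scaleC a x + scaleC a y"
    and scaleC_add_left: "scaleC (a + b) x = scaleC a x + scaleC b x"
    and scaleC_scaleC: "scaleC a (scaleC b x) = scaleC (a * b) x"
    and scaleC_one: "scaleC 1 x = x"
    and scaleR_scaleC: "scaleR r x = scaleC (complex_of_real r) x"

class complex_inner = complex_vector + real_normed_vector +
  fixes cinner :: "'a \<Rightarrow> 'a \<Rightarrow> complex"
  assumes cinner_commute: "cinner x y = cnj (cinner y x)"
    and cinner_add_left: "cinner (x + y) z = cinner x z + cinner y z"
    and cinner_scaleC_left: "cinner (scaleC r x) y = r * cinner x y"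
    and cinner_ge_zero: "0 \<le> Re (cinner x x)"
    and cinner_eq_zero_iff: "cinner x x = 0 \<longleftrightarrow> x = 0"
    and norm_eq_sqrt_cinner: "norm x = sqrt (Re (cinner x x))"

text \<open>A complex Hilbert space is a type of class
  \<open>{complex_inner, complete_space}\<close>.\<close>

definition bounded_clinear_op :: "('a::complex_inner \<Rightarrow> 'a) \<Rightarrow> bool" where
  "bounded_clinear_op T \<longleftrightarrow>
     (\<forall>x y. T (x + y) = T x + T y) \<and>
     (\<forall>c x. T (scaleC c x) = scaleC c (T x)) \<and>
     (\<exists>K. \<forall>x. norm (T x) \<le> norm x * K)"

definition BH :: "('a::complex_inner \<Rightarrow> 'a) set" where
  "BH = {T. bounded_clinear_op T}"

definition adj :: "('a::complex_inner \<Rightarrow> 'a) \<Rightarrow> ('a \<Rightarrow> 'a)" where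
  "adj T = (THE S. \<forall>x y. cinner (T x) y = cinner x (S y))"

definition opRe :: "('a::complex_inner \<Rightarrow> 'a) \<Rightarrow> ('a \<Rightarrow> 'a)" where
  "opRe T = (\<lambda>x. scaleC (1/2) (T x + adj T x))"

definition op_norm_on :: "(('a::complex_inner \<Rightarrow> 'a) \<Rightarrow> real) \<Rightarrow> bool" where
  "op_norm_on N \<longleftrightarrow>
     (\<forall>T\<in>BH. N T = 0 \<longleftrightarrow> T = (\<lambda>x. 0)) \<and>
     (\<forall>c. \<forall>T\<in>BH. N (\<lambda>x. scaleC c (T x)) = cmod c * N T) \<and>
     (\<forall>S\<in>BH. \<forall>T\<in>BH. N (\<lambda>x. S x + T x) \<le> N S + N T)"

definition wN :: "(('a::complex_inner \<Rightarrow> 'a) \<Rightarrow> real) \<Rightarrow> ('a \<Rightarrow> 'a) \<Rightarrow> real" where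
  "wN N T = (SUP \<theta>::real. N (opRe (\<lambda>x. scaleC (exp (\<i> * complex_of_real \<theta>)) (T x))))"

definition wNe :: "(('a::complex_inner \<Rightarrow> 'a) \<Rightarrow> real) \<Rightarrow> ('a \<Rightarrow> 'a) \<Rightarrow> ('a \<Rightarrow> 'a) \<Rightarrow> real" where
  "wNe N B C = (SUP l \<in> {(l1, l2). (cmod l1)\<^sup>2 + (cmod l2)\<^sup>2 \<le> 1}.
     (SUP \<theta>::real. N (opRe (\<lambda>x. scaleC (exp (\<i> * complex_of_real \<theta>))
        (scaleC (fst l) (B x) + scaleC (snd l) (C x))))))"

end

theory Submission
  imports Defs
begin


interpretation cv: vector_space "scaleC :: complex \<Rightarrow> 'a \<Rightarrow> 'a::complex_vector"
  by unfold_locales (auto simp: scaleC_add_right scaleC_add_left scaleC_scaleC scaleC_one)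

lemma cnj_cinner: "cnj (cinner y x) = cinner x (y::'a::complex_inner)"
  by (simp only: cinner_commute[of x y])

lemma cinner_add_right: "cinner x (y + z) = cinner x y + cinner (x::'a::complex_inner) z"
proof -
  have "cnj (cinner (y + z) x) = cnj (cinner y x) + cnj (cinner z x)" by (simp only: cinner_add_left complex_cnj_add)
  thus ?thesis by (simp only: cnj_cinner)
qed

lemma cinner_scaleC_right: "cinner x (scaleC r y) = cnj r * cinner (x::'a::complex_inner) y"
proof -
  have "cnj (cinner (scaleC r y) x) = cnj r * cnj (cinner y x)" by (simp only: cinner_scaleC_left complex_cnj_mult)
  thus ?thesis by (simp only: cnj_cinner)
qed

lemma cinner_zero_left[simp]: "cinner 0 (y::'a::complex_inner) = 0"
proof -
  have "cinner (0 + 0) y = cinner 0 y + cinner 0 y" by (rule cinner_add_left)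
  thus ?thesis by simp
qed

lemma cinner_zero_right[simp]: "cinner (x::'a::complex_inner) 0 = 0"
proof -
  have "cnj (cinner 0 x) = 0" by simp
  thus ?thesis by (simp only: cnj_cinner)
qed

lemma cinner_minus_left: "cinner (- x) (y::'a::complex_inner) = - cinner x y"
proof -
  have "cinner (x + - x) y = cinner x y + cinner (- x) y" by (rule cinner_add_left)
  hence "cinner (- x) y + cinner x y = 0" by (simp add: add.commute)
  thus ?thesis by (simp add: eq_neg_iff_add_eq_0)
qed

lemma cinner_diff_left: "cinner (x - z) (y::'a::complex_inner) = cinner x y - cinner z y"
  by (simp only: diff_conv_add_uminus cinner_add_left cinner_minus_left)

lemma cinner_diff_right: "cinner x (y - z) = cinner x y - cinner (x::'a::complex_inner) z"
proof -
  have "cnj (cinner (y - z) x) = cnj (cinner y x) - cnj (cinner z x)" by (simp only: cinner_diff_left complex_cnj_diff)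
  thus ?thesis by (simp only: cnj_cinner)
qed

lemma cinner_self: "cinner x (x::'a::complex_inner) = complex_of_real ((norm x)\<^sup>2)"
proof -
  have h: "Im (cinner x x) = Im (cnj (cinner x x))" by (rule arg_cong[OF cinner_commute])
  have "Im (cnj (cinner x x)) = - Im (cinner x x)" by simp
  hence "Im (cinner x x) = 0" using h by linarith
  moreover have "Re (cinner x x) = (norm x)^2" by (simp only: norm_eq_sqrt_cinner[of x] real_sqrt_pow2 cinner_ge_zero)
  ultimately show ?thesis by (simp add: complex_eq_iff)
qed

lemma norm_scaleC: "norm (scaleC c (x::'a::complex_inner)) = cmod c * norm x"
proof -
  have "cinner (scaleC c x) (scaleC c x) = (c * cnj c) * cinner x x" by (simp add: cinner_scaleC_left cinner_scaleC_right mult.assoc)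
  also have "... = complex_of_real ((cmod c)^2) * complex_of_real ((norm x)^2)" by (simp only: complex_norm_square cinner_self)
  also have "... = complex_of_real ((cmod c)^2 * (norm x)^2)" by (simp only: of_real_mult)
  finally have "cinner (scaleC c x) (scaleC c x) = complex_of_real ((cmod c)^2 * (norm x)^2)" .
  hence "complex_of_real ((norm (scaleC c x))^2) = complex_of_real ((cmod c)^2 * (norm x)^2)" by (simp only: cinner_self)
  hence "(norm (scaleC c x))^2 = ((cmod c) * norm x)^2" by (simp only: of_real_eq_iff power_mult_distrib)
  thus ?thesis by (simp add: power2_eq_iff_nonneg)
qed

lemma norm_expand: "(norm (x + scaleC t y))\<^sup>2 = (norm x)\<^sup>2 + 2 * Re (cnj t * cinner x y) + (cmod t)\<^sup>2 * (norm (y::'a::complex_inner))\<^sup>2"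
proof -
  have "complex_of_real ((norm (x + scaleC t y))\<^sup>2) = cinner (x + scaleC t y) (x + scaleC t y)" by (simp only: cinner_self)
  also have "\<dots> = cinner x x + cnj t * cinner x y + (t * cinner y x + t * (cnj t * cinner y y))"
    apply (simp only: cinner_add_left cinner_add_right cinner_scaleC_left cinner_scaleC_right)
    apply (simp only: ring_distribs add.assoc)
    by (simp add: ac_simps)
  finally have e: "(norm (x + scaleC t y))\<^sup>2 = Re (cinner x x + cnj t * cinner x y + (t * cinner y x + t * (cnj t * cinner y y)))"
    by (metis Re_complex_of_real)
  have r1: "Re (t * cinner y x) = Re (cnj t * cinner x y)"
  proof -
    have "cinner y x = cnj (cinner x y)" by (rule cinner_commute)
    hence "t * cinner y x = cnj (cnj t * cinner x y)" by (simp only: complex_cnj_mult complex_cnj_cnj)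
    hence "Re (t * cinner y x) = Re (cnj (cnj t * cinner x y))" by (rule arg_cong)
    thus ?thesis by (simp only: cnj.sel)
  qed
  have r2: "t * (cnj t * cinner y y) = complex_of_real ((cmod t)^2 * (norm y)^2)"
    by (simp only: mult.assoc[symmetric] complex_norm_square[symmetric] cinner_self of_real_mult)
  have r3: "Re (cinner x x) = (norm x)^2" by (simp only: cinner_self Re_complex_of_real)
  show ?thesis unfolding e plus_complex.sel r1 r2 r3 Re_complex_of_real by simp
qed

lemma cauchy_schwarz: "cmod (cinner x y) \<le> norm x * norm (y::'a::complex_inner)"
proof (cases "y = 0")
  case True thus ?thesis by simp
next
  case False
  define a where "a = cinner x y"
  define Y where "Y = (norm y)^2"
  define A where "A = (cmod a)^2"
  have Y: "Y > 0" using False by (simp add: Y_def)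
  define t where "t = - a / complex_of_real Y"
  have c1: "cnj t = - cnj a / complex_of_real Y" by (simp add: t_def)
  have c2: "cnj t * a = - (a * cnj a) / complex_of_real Y" unfolding c1 by (simp add: mult.commute)
  have c3: "Re (cnj t * a) = - A / Y" unfolding c2 A_def complex_norm_square[symmetric]
    by (simp del: of_real_power)
  have c4: "(cmod t)^2 = A / Y^2" by (simp add: t_def norm_divide power_divide A_def)
  have "0 \<le> (norm (x + scaleC t y))\<^sup>2" by simp
  also have "\<dots> = (norm x)\<^sup>2 + 2 * (- A / Y) + A / Y^2 * Y"
    unfolding norm_expand c3 c4 a_def[symmetric] Y_def by simp
  also have "A / Y^2 * Y = A / Y" using Y by (simp add: power2_eq_square)
  finally have "0 \<le> (norm x)\<^sup>2 - A / Y" by simp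
  hence "A / Y \<le> (norm x)\<^sup>2" by simp
  hence "A \<le> (norm x)\<^sup>2 * Y" using Y by (simp add: pos_divide_le_eq)
  hence "(cmod a)^2 \<le> (norm x * norm y)^2" by (simp add: A_def Y_def power_mult_distrib)
  thus ?thesis unfolding a_def by (rule power2_le_imp_le) simp
qed



lemma parallelogram: "(norm (x - y))\<^sup>2 + (norm (x + y))\<^sup>2 = 2 * (norm x)\<^sup>2 + 2 * (norm (y::'a::complex_inner))\<^sup>2"
proof -
  have e1: "x + y = x + scaleC 1 y" by (simp only: scaleC_one)
  have e2: "x - y = x + scaleC (-1) y" by (simp add: cv.scale_minus_left scaleC_one)
  show ?thesis unfolding e1 e2 norm_expand by simp
qed

lemma riesz:
  fixes f :: "'a::{complex_inner,complete_space} \<Rightarrow> complex"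
  assumes add: "\<And>x y. f (x + y) = f x + f y" and sc: "\<And>c x. f (scaleC c x) = c * f x"
    and bd: "\<And>x. cmod (f x) \<le> norm x * K"
  shows "\<exists>z. \<forall>x. f x = cinner x z"
proof (cases "\<forall>x. f x = 0")
  case True then show ?thesis by (intro exI[of _ 0]) simp
next
  case False
  then obtain u where u: "f u \<noteq> 0" by auto
  define u1 where "u1 = scaleC (1 / f u) u"
  have fu1: "f u1 = 1" using u by (simp add: u1_def sc)
  define S where "S = (\<lambda>x. (norm x)^2) ` {x. f x = 1}"
  define d where "d = Inf S"
  have Sne: "S \<noteq> {}" using fu1 by (auto simp: S_def)
  have Sbdd: "bdd_below S" unfolding S_def by (rule bdd_belowI[of _ 0]) auto
  have dle: "d \<le> (norm x)^2" if "f x = 1" for x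
  proof -
    have "(norm x)^2 \<in> S" using that by (auto simp: S_def)
    thus ?thesis unfolding d_def using Sbdd by (rule cInf_lower)
  qed
  define e where "e = (\<lambda>n::nat. inverse (real (Suc n)))"
  have ex: "\<exists>x. f x = 1 \<and> (norm x)^2 < d + e n" for n
  proof -
    have "Inf S < d + e n" by (simp add: d_def e_def)
    from cInf_lessD[OF Sne this] show ?thesis by (auto simp: S_def)
  qed
  then obtain xs where xs1: "\<And>n. f (xs n) = 1" and xs2: "\<And>n. (norm (xs n))^2 < d + e n" by metis
  have f0: "f 0 = 0" using add[of 0 0] by simp
  have fminus: "f (- x) = - f x" for x using add[of x "- x"] f0 by (simp add: eq_neg_iff_add_eq_0 add.commute)
  have fdiff: "f (x - y) = f x - f y" for x y using add[of x "- y"] fminus[of y] by simp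
  have emono: "e n \<le> e m" if "m \<le> n" for m n using that by (simp add: e_def inverse_le_iff_le)
  have epos: "e n > 0" for n by (simp add: e_def)
  have dist_bound: "(norm (xs m - xs n))\<^sup>2 \<le> 2 * e m + 2 * e n" for m n
  proof -
    have fm: "f (scaleC (1/2) (xs m + xs n)) = 1" by (simp add: sc add xs1)
    have "d \<le> (norm (scaleC (1/2) (xs m + xs n)))^2" using dle[OF fm] .
    also have "\<dots> = (norm (xs m + xs n))^2 / 4" by (simp add: norm_scaleC power_divide)
    finally have "4 * d \<le> (norm (xs m + xs n))^2" by simp
    moreover have "(norm (xs m - xs n))\<^sup>2 + (norm (xs m + xs n))\<^sup>2 = 2 * (norm (xs m))\<^sup>2 + 2 * (norm (xs n))\<^sup>2"
      by (rule parallelogram)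
    ultimately show ?thesis using xs2[of m] xs2[of n] by linarith
  qed
  have "Cauchy xs"
  proof (rule CauchyI)
    fix r :: real assume r: "0 < r"
    then have "0 < r^2 / 4" by simp
    from reals_Archimedean[OF this] obtain M where M: "e M < r^2 / 4" by (auto simp: e_def)
    show "\<exists>M. \<forall>m\<ge>M. \<forall>n\<ge>M. norm (xs m - xs n) < r"
    proof (intro exI[of _ M] allI impI)
      fix m n assume "M \<le> m" "M \<le> n"
      hence "e m \<le> e M" "e n \<le> e M" by (auto intro: emono)
      hence "(norm (xs m - xs n))\<^sup>2 < r^2" using dist_bound[of m n] M by linarith
      thus "norm (xs m - xs n) < r" using r by (simp add: power_less_imp_less_base)
    qed
  qed
  then obtain v where v: "xs \<longlonglongrightarrow> v" by (auto simp: Cauchy_convergent_iff convergent_def)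
  have bl: "bounded_linear f"
  proof (rule bounded_linear_intro[of _ K])
    show "f (x + y) = f x + f y" for x y by (rule add)
    show "f (scaleR r x) = scaleR r (f x)" for r x by (simp add: scaleR_scaleC sc scaleR_conv_of_real)
    show "norm (f x) \<le> norm x * K" for x using bd by simp
  qed
  have "(\<lambda>n. f (xs n)) \<longlonglongrightarrow> f v" by (rule bounded_linear.tendsto[OF bl v])
  hence "(\<lambda>n. 1) \<longlonglongrightarrow> f v" by (simp add: xs1)
  hence fv: "f v = 1" using LIMSEQ_unique tendsto_const by blast
  have "(\<lambda>n. (norm (xs n))^2) \<longlonglongrightarrow> (norm v)^2" by (intro tendsto_intros v)
  moreover have "(\<lambda>n. d + e n) \<longlonglongrightarrow> d + 0" unfolding e_def by (intro tendsto_intros LIMSEQ_inverse_real_of_nat)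
  ultimately have nv: "(norm v)^2 \<le> d" using xs2 by (intro LIMSEQ_le[of _ "(norm v)^2" _ "d + 0", simplified]) (auto intro: less_imp_le)
  have orth: "cinner v w = 0" if fw: "f w = 0" for w
  proof (rule ccontr)
    assume a0: "cinner v w \<noteq> 0"
    define a where "a = cinner v w"
    define A where "A = (cmod a)^2"
    define W where "W = (norm w)^2"
    define s where "s = 1 / (W + 1)"
    have A: "A > 0" using a0 by (simp add: A_def a_def)
    have W: "W \<ge> 0" by (simp add: W_def)
    have s: "s > 0" "s * W < 1" using W by (auto simp: s_def field_simps)
    define t where "t = - (complex_of_real s * a)"
    have "f (v + scaleC t w) = 1" by (simp add: add sc fv fw)
    hence "d \<le> (norm (v + scaleC t w))^2" by (rule dle)
    also have "\<dots> = (norm v)^2 + 2 * Re (cnj t * a) + (cmod t)^2 * W" by (simp add: norm_expand a_def W_def)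
    also have "Re (cnj t * a) = - s * A"
    proof -
      have "cnj t * a = - (complex_of_real s * (a * cnj a))" by (simp add: t_def mult.commute mult.left_commute)
      also have "\<dots> = - complex_of_real (s * A)" by (simp only: complex_norm_square[symmetric] A_def of_real_mult)
      finally show ?thesis by simp
    qed
    also have "(cmod t)^2 = s^2 * A" by (simp add: t_def A_def norm_mult power_mult_distrib)
    finally have "d \<le> (norm v)^2 + 2 * (- s * A) + s^2 * A * W" .
    hence "0 \<le> - 2 * s * A + s * A * (s * W)" using nv by (simp add: power2_eq_square algebra_simps)
    moreover have "s * A * (s * W) < s * A * 1" using s A by (intro mult_strict_left_mono) auto
    ultimately show False using s A by (simp add: algebra_simps)
  qed
  have v0: "v \<noteq> 0" using fv f0 by auto
  define V where "V = (norm v)^2"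
  have V: "V > 0" using v0 by (simp add: V_def)
  show ?thesis
  proof (intro exI[of _ "scaleC (1 / complex_of_real V) v"] allI)
    fix x
    define w where "w = x + scaleC (- f x) v"
    have "f w = 0" by (simp add: w_def add sc fv fdiff)
    hence "cinner v w = 0" by (rule orth)
    hence "cinner w v = 0" using cinner_commute[of w v] by simp
    hence "cinner x v + (- f x) * complex_of_real V = 0"
      by (simp only: w_def cinner_add_left cinner_scaleC_left cinner_self V_def)
    hence "cinner x v = f x * complex_of_real V" by (simp add: algebra_simps)
    thus "f x = cinner x (scaleC (1 / complex_of_real V) v)" using V by (simp add: cinner_scaleC_right)
  qed
qed



lemma BH_iff: "T \<in> BH \<longleftrightarrow> (\<forall>x y. T (x + y) = T x + T y) \<and> (\<forall>c x. T (scaleC c x) = scaleC c (T x)) \<and> (\<exists>K. \<forall>x. norm (T x) \<le> norm x * K)"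
  by (simp add: BH_def bounded_clinear_op_def)

lemma BH_add_D: "T \<in> BH \<Longrightarrow> T (x + y) = T x + T y"
  by (simp add: BH_iff)
lemma BH_scale_D: "T \<in> BH \<Longrightarrow> T (scaleC c x) = scaleC c (T x)"
  by (simp add: BH_iff)
lemma BH_bound_D: "T \<in> BH \<Longrightarrow> \<exists>K\<ge>0. \<forall>x. norm (T x) \<le> norm x * K"
proof -
  assume "T \<in> BH"
  then obtain K where K: "\<And>x. norm (T x) \<le> norm x * K" by (auto simp: BH_iff)
  have "norm (T x) \<le> norm x * \<bar>K\<bar>" for x
    using K[of x] by (meson abs_ge_self mult_left_mono norm_ge_zero order_trans)
  thus ?thesis by (intro exI[of _ "\<bar>K\<bar>"]) auto
qed

lemma BH_add: "S \<in> BH \<Longrightarrow> T \<in> BH \<Longrightarrow> (\<lambda>x. S x + T x) \<in> BH"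
proof -
  assume S: "S \<in> BH" and T: "T \<in> BH"
  obtain K1 where K1: "\<And>x. norm (S x) \<le> norm x * K1" using BH_bound_D[OF S] by auto
  obtain K2 where K2: "\<And>x. norm (T x) \<le> norm x * K2" using BH_bound_D[OF T] by auto
  have "norm (S x + T x) \<le> norm x * (K1 + K2)" for x
    using norm_triangle_ineq[of "S x" "T x"] K1[of x] K2[of x] by (simp add: algebra_simps)
  hence 3: "\<exists>K. \<forall>x. norm (S x + T x) \<le> norm x * K" by blast
  have 1: "\<forall>x y. S (x+y) + T (x+y) = (S x + T x) + (S y + T y)" by (simp add: BH_add_D[OF S] BH_add_D[OF T] add_ac)
  have 2: "\<forall>c x. S (scaleC c x) + T (scaleC c x) = scaleC c (S x + T x)" by (simp add: BH_scale_D[OF S] BH_scale_D[OF T] cv.scale_right_distrib)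
  show ?thesis unfolding BH_iff using 1 2 3 by blast
qed

lemma BH_scale: "T \<in> BH \<Longrightarrow> (\<lambda>x. scaleC c (T x)) \<in> BH"
proof -
  assume T: "T \<in> BH"
  obtain K where K: "\<And>x. norm (T x) \<le> norm x * K" using BH_bound_D[OF T] by auto
  have "norm (scaleC c (T x)) \<le> norm x * (cmod c * K)" for x
    using mult_left_mono[OF K[of x], of "cmod c"] by (simp add: norm_scaleC ac_simps)
  hence 3: "\<exists>K. \<forall>x. norm (scaleC c (T x)) \<le> norm x * K" by blast
  have 1: "\<forall>x y. scaleC c (T (x+y)) = scaleC c (T x) + scaleC c (T y)" by (simp add: BH_add_D[OF T] cv.scale_right_distrib)
  have 2: "\<forall>d x. scaleC c (T (scaleC d x)) = scaleC d (scaleC c (T x))" by (simp add: BH_scale_D[OF T] scaleC_scaleC mult.commute)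
  show ?thesis unfolding BH_iff using 1 2 3 by blast
qed

lemma BH_zero: "(\<lambda>x. 0) \<in> BH"
  by (auto simp: BH_iff intro!: exI[of _ 0])

lemma cinner_unique: "(\<And>x. cinner x z1 = cinner x (z2::'a::complex_inner)) \<Longrightarrow> z1 = z2"
proof -
  assume h: "\<And>x. cinner x z1 = cinner x z2"
  have "cinner (z1 - z2) (z1 - z2) = 0" by (simp only: cinner_diff_right h diff_self)
  thus ?thesis by (simp add: cinner_eq_zero_iff)
qed

lemma adj_exists:
  fixes T :: "'a::{complex_inner,complete_space} \<Rightarrow> 'a"
  assumes T: "T \<in> BH"
  shows "\<exists>z. \<forall>x. cinner (T x) y = cinner x z"
proof -
  obtain K where K0: "K \<ge> 0" and K: "\<And>x. norm (T x) \<le> norm x * K" using BH_bound_D[OF T] by auto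
  show ?thesis
  proof (rule riesz[where K = "K * norm y"])
    show "cinner (T (x + z)) y = cinner (T x) y + cinner (T z) y" for x z by (simp add: BH_add_D[OF T] cinner_add_left)
    show "cinner (T (scaleC c x)) y = c * cinner (T x) y" for c x by (simp add: BH_scale_D[OF T] cinner_scaleC_left)
    show "cmod (cinner (T x) y) \<le> norm x * (K * norm y)" for x
    proof -
      have "cmod (cinner (T x) y) \<le> norm (T x) * norm y" by (rule cauchy_schwarz)
      also have "\<dots> \<le> norm x * K * norm y" by (rule mult_right_mono[OF K]) simp
      finally show ?thesis by (simp add: ac_simps)
    qed
  qed
qed

lemma adj_prop:
  fixes T :: "'a::{complex_inner,complete_space} \<Rightarrow> 'a"
  assumes T: "T \<in> BH"
  shows "\<forall>x y. cinner (T x) y = cinner x (adj T y)"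
proof -
  have "\<forall>y. \<exists>z. \<forall>x. cinner (T x) y = cinner x z" using adj_exists[OF T] by blast
  from choice[OF this] obtain S where S: "\<forall>y. \<forall>x. cinner (T x) y = cinner x (S y)" by blast
  have "\<exists>!S. \<forall>x y. cinner (T x) y = cinner x (S y)"
  proof (rule ex1I[of _ S])
    show "\<forall>x y. cinner (T x) y = cinner x (S y)" using S by blast
    fix S' assume S': "\<forall>x y. cinner (T x) y = cinner x (S' y)"
    show "S' = S"
    proof
      fix y show "S' y = S y" by (rule cinner_unique) (simp only: S[rule_format, symmetric] S'[rule_format, symmetric])
    qed
  qed
  from theI'[OF this] show ?thesis unfolding adj_def .
qed

lemma adj_eq:
  fixes T :: "'a::{complex_inner,complete_space} \<Rightarrow> 'a"
  assumes T: "T \<in> BH" and S: "\<And>x y. cinner (T x) y = cinner x (S y)"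
  shows "adj T = S"
proof
  fix y show "adj T y = S y" by (rule cinner_unique) (simp only: S[symmetric] adj_prop[OF T, rule_format, symmetric])
qed

lemma adj_BH:
  fixes T :: "'a::{complex_inner,complete_space} \<Rightarrow> 'a"
  assumes T: "T \<in> BH"
  shows "adj T \<in> BH"
proof -
  note P = adj_prop[OF T, rule_format]
  obtain K where K0: "K \<ge> 0" and K: "\<And>x. norm (T x) \<le> norm x * K" using BH_bound_D[OF T] by auto
  have a: "adj T (x + y) = adj T x + adj T y" for x y
    by (rule cinner_unique) (simp add: P[symmetric] cinner_add_right)
  have s: "adj T (scaleC c x) = scaleC c (adj T x)" for c x
    by (rule cinner_unique) (simp add: P[symmetric] cinner_scaleC_right)
  have b: "norm (adj T y) \<le> norm y * K" for y
  proof -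
    have "complex_of_real ((norm (adj T y))^2) = cinner (T (adj T y)) y" by (simp add: P cinner_self)
    hence "(norm (adj T y))^2 = cmod (cinner (T (adj T y)) y)" by (metis norm_of_real abs_of_nonneg zero_le_power2)
    also have "\<dots> \<le> norm (T (adj T y)) * norm y" by (rule cauchy_schwarz)
    also have "\<dots> \<le> norm (adj T y) * K * norm y" by (rule mult_right_mono[OF K]) simp
    finally have h: "norm (adj T y) * norm (adj T y) \<le> norm (adj T y) * (K * norm y)" by (simp add: power2_eq_square ac_simps)
    show ?thesis
    proof (cases "norm (adj T y) = 0")
      case True thus ?thesis using K0 by simp
    next
      case False hence "norm (adj T y) > 0" by simp
      with h have "norm (adj T y) \<le> K * norm y" by simp
      thus ?thesis by (simp add: ac_simps)
    qed
  qed
  show ?thesis using a s b by (auto simp: BH_iff)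
qed

lemma adj_scale:
  fixes T :: "'a::{complex_inner,complete_space} \<Rightarrow> 'a"
  assumes T: "T \<in> BH"
  shows "adj (\<lambda>x. scaleC c (T x)) = (\<lambda>y. scaleC (cnj c) (adj T y))"
  by (rule adj_eq[OF BH_scale[OF T]]) (simp add: cinner_scaleC_left cinner_scaleC_right adj_prop[OF T, rule_format])

lemma adj_add:
  fixes S T :: "'a::{complex_inner,complete_space} \<Rightarrow> 'a"
  assumes S: "S \<in> BH" and T: "T \<in> BH"
  shows "adj (\<lambda>x. S x + T x) = (\<lambda>y. adj S y + adj T y)"
  by (rule adj_eq[OF BH_add[OF S T]]) (simp add: cinner_add_left cinner_add_right adj_prop[OF S, rule_format] adj_prop[OF T, rule_format])

lemma opRe_BH:
  fixes T :: "'a::{complex_inner,complete_space} \<Rightarrow> 'a"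
  assumes T: "T \<in> BH" shows "opRe T \<in> BH"
  unfolding opRe_def by (intro BH_scale BH_add T adj_BH)

lemma opRe_add:
  fixes S T :: "'a::{complex_inner,complete_space} \<Rightarrow> 'a"
  assumes S: "S \<in> BH" and T: "T \<in> BH"
  shows "opRe (\<lambda>x. S x + T x) = (\<lambda>x. opRe S x + opRe T x)"
  unfolding opRe_def adj_add[OF S T] by (simp add: cv.scale_right_distrib ac_simps)

lemma opRe_scale_real:
  fixes T :: "'a::{complex_inner,complete_space} \<Rightarrow> 'a"
  assumes T: "T \<in> BH"
  shows "opRe (\<lambda>x. scaleC (complex_of_real r) (T x)) = (\<lambda>x. scaleC (complex_of_real r) (opRe T x))"
  unfolding opRe_def adj_scale[OF T] by (simp add: cv.scale_right_distrib scaleC_scaleC mult.commute)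

lemma opRe_zero: "opRe (\<lambda>x. 0::'a::{complex_inner,complete_space}) = (\<lambda>x. 0)"
proof -
  have "adj (\<lambda>x. 0::'a) = (\<lambda>x. 0)" by (rule adj_eq[OF BH_zero]) simp
  thus ?thesis by (simp add: opRe_def)
qed



lemma N_scale: "op_norm_on N \<Longrightarrow> T \<in> BH \<Longrightarrow> N (\<lambda>x. scaleC c (T x)) = cmod c * N T"
  unfolding op_norm_on_def by blast

lemma N_add: "op_norm_on N \<Longrightarrow> S \<in> BH \<Longrightarrow> T \<in> BH \<Longrightarrow> N (\<lambda>x. S x + T x) \<le> N S + N T"
  unfolding op_norm_on_def by blast

lemma N_nonneg:
  assumes N: "op_norm_on N" and T: "T \<in> BH" shows "0 \<le> N T"
proof -
  have z: "N (\<lambda>x. 0) = 0" using N BH_zero unfolding op_norm_on_def by blast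
  have e: "(\<lambda>x. T x + scaleC (-1) (T x)) = (\<lambda>x. 0)" by (simp add: cv.scale_minus_left scaleC_one)
  have "N (\<lambda>x. T x + scaleC (-1) (T x)) \<le> N T + N (\<lambda>x. scaleC (-1) (T x))"
    by (rule N_add[OF N T BH_scale[OF T]])
  also have "N (\<lambda>x. scaleC (-1) (T x)) = N T" using N_scale[OF N T, of "-1"] by simp
  finally show ?thesis unfolding e z by simp
qed

definition E :: "real \<Rightarrow> complex" where "E \<theta> = exp (\<i> * complex_of_real \<theta>)"

lemma E_decomp: "E \<theta> = complex_of_real (cos \<theta>) + \<i> * complex_of_real (sin \<theta>)"
  unfolding E_def cis_conv_exp[symmetric] by (simp add: complex_eq_iff)

lemma E_add: "E a * E b = E (a + b)"
  unfolding E_def by (simp add: exp_add[symmetric] distrib_left)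

lemma polar: "c = complex_of_real (cmod c) * E (Arg c)"
  unfolding E_def cis_conv_exp[symmetric] by (metis rcis_cmod_Arg rcis_def)

definition hh :: "(('a::{complex_inner,complete_space} \<Rightarrow> 'a) \<Rightarrow> real) \<Rightarrow> ('a \<Rightarrow> 'a) \<Rightarrow> real \<Rightarrow> real" where
  "hh N T \<theta> = N (opRe (\<lambda>x. scaleC (E \<theta>) (T x)))"

lemma wN_hh: "wN N T = (SUP \<theta>. hh N T \<theta>)"
  unfolding wN_def hh_def E_def ..

lemma rot:
  fixes T :: "'a::{complex_inner,complete_space} \<Rightarrow> 'a"
  assumes T: "T \<in> BH"
  shows "opRe (\<lambda>x. scaleC (E \<theta>) (T x)) = (\<lambda>x. scaleC (complex_of_real (cos \<theta>)) (opRe T x) + scaleC (complex_of_real (sin \<theta>)) (opRe (\<lambda>x. scaleC \<i> (T x)) x))"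
proof -
  have e: "(\<lambda>x. scaleC (E \<theta>) (T x)) = (\<lambda>x. scaleC (complex_of_real (cos \<theta>)) (T x) + scaleC (complex_of_real (sin \<theta>)) (scaleC \<i> (T x)))"
    by (simp add: E_decomp scaleC_add_left scaleC_scaleC mult.commute)
  have B1: "(\<lambda>x. scaleC (complex_of_real (cos \<theta>)) (T x)) \<in> BH" by (rule BH_scale[OF T])
  have B2: "(\<lambda>x. scaleC (complex_of_real (sin \<theta>)) (scaleC \<i> (T x))) \<in> BH" by (rule BH_scale[OF BH_scale[OF T]])
  show ?thesis unfolding e
    by (simp only: opRe_add[OF B1 B2] opRe_scale_real[OF T] opRe_scale_real[OF BH_scale[OF T]])
qed

lemma hh_bound:
  fixes T :: "'a::{complex_inner,complete_space} \<Rightarrow> 'a"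
  assumes N: "op_norm_on N" and T: "T \<in> BH"
  shows "hh N T \<theta> \<le> N (opRe T) + N (opRe (\<lambda>x. scaleC \<i> (T x)))"
proof -
  have R1: "opRe T \<in> BH" by (rule opRe_BH[OF T])
  have R2: "opRe (\<lambda>x. scaleC \<i> (T x)) \<in> BH" by (rule opRe_BH[OF BH_scale[OF T]])
  have "hh N T \<theta> \<le> N (\<lambda>x. scaleC (complex_of_real (cos \<theta>)) (opRe T x)) + N (\<lambda>x. scaleC (complex_of_real (sin \<theta>)) (opRe (\<lambda>x. scaleC \<i> (T x)) x))"
    unfolding hh_def rot[OF T] by (rule N_add[OF N BH_scale[OF R1] BH_scale[OF R2]])
  also have "\<dots> = \<bar>cos \<theta>\<bar> * N (opRe T) + \<bar>sin \<theta>\<bar> * N (opRe (\<lambda>x. scaleC \<i> (T x)))"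
    by (simp add: N_scale[OF N R1] N_scale[OF N R2])
  also have "\<dots> \<le> 1 * N (opRe T) + 1 * N (opRe (\<lambda>x. scaleC \<i> (T x)))"
    by (intro add_mono mult_right_mono N_nonneg[OF N R1] N_nonneg[OF N R2] abs_cos_le_one abs_sin_le_one)
  finally show ?thesis by simp
qed

lemma hh_bdd:
  fixes T :: "'a::{complex_inner,complete_space} \<Rightarrow> 'a"
  assumes N: "op_norm_on N" and T: "T \<in> BH"
  shows "bdd_above (range (hh N T))"
  using hh_bound[OF N T] by (intro bdd_aboveI2) 

lemma wN_ge:
  fixes T :: "'a::{complex_inner,complete_space} \<Rightarrow> 'a"
  assumes N: "op_norm_on N" and T: "T \<in> BH"
  shows "hh N T \<theta> \<le> wN N T"
  unfolding wN_hh by (rule cSUP_upper[OF _ hh_bdd[OF N T]]) simp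

lemma wN_le:
  assumes "\<And>\<theta>. hh N T \<theta> \<le> M" shows "wN N T \<le> M"
  unfolding wN_hh by (rule cSUP_least) (auto intro: assms)

lemma hh_nonneg:
  fixes T :: "'a::{complex_inner,complete_space} \<Rightarrow> 'a"
  assumes N: "op_norm_on N" and T: "T \<in> BH"
  shows "0 \<le> hh N T \<theta>"
  unfolding hh_def by (rule N_nonneg[OF N opRe_BH[OF BH_scale[OF T]]])

lemma wN_nonneg:
  fixes T :: "'a::{complex_inner,complete_space} \<Rightarrow> 'a"
  assumes N: "op_norm_on N" and T: "T \<in> BH"
  shows "0 \<le> wN N T"
  using hh_nonneg[OF N T, of 0] wN_ge[OF N T, of 0] by linarith

lemma wN_scale_le:
  fixes T :: "'a::{complex_inner,complete_space} \<Rightarrow> 'a"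
  assumes N: "op_norm_on N" and T: "T \<in> BH"
  shows "wN N (\<lambda>x. scaleC c (T x)) \<le> cmod c * wN N T"
proof (rule wN_le)
  fix \<theta>
  define a where "a = Arg c"
  have e: "(\<lambda>x. scaleC (E \<theta>) (scaleC c (T x))) = (\<lambda>x. scaleC (complex_of_real (cmod c)) (scaleC (E (\<theta> + a)) (T x)))"
  proof -
    have "E \<theta> * c = complex_of_real (cmod c) * E (\<theta> + a)"
      by (subst polar[of c]) (simp add: a_def E_add[symmetric] ac_simps)
    thus ?thesis by (simp add: scaleC_scaleC)
  qed
  have B1: "(\<lambda>x. scaleC (E (\<theta> + a)) (T x)) \<in> BH" by (rule BH_scale[OF T])
  have "hh N (\<lambda>x. scaleC c (T x)) \<theta> = cmod c * hh N T (\<theta> + a)"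
    unfolding hh_def e opRe_scale_real[OF B1] by (simp add: N_scale[OF N opRe_BH[OF B1]])
  also have "\<dots> \<le> cmod c * wN N T" by (intro mult_left_mono wN_ge[OF N T]) simp
  finally show "hh N (\<lambda>x. scaleC c (T x)) \<theta> \<le> cmod c * wN N T" .
qed

lemma wN_scale:
  fixes T :: "'a::{complex_inner,complete_space} \<Rightarrow> 'a"
  assumes N: "op_norm_on N" and T: "T \<in> BH"
  shows "wN N (\<lambda>x. scaleC c (T x)) = cmod c * wN N T"
proof (cases "c = 0")
  case True
  have "wN N (\<lambda>x. scaleC c (T x)) \<le> 0" using wN_scale_le[OF N T, of c] True by simp
  moreover have "0 \<le> wN N (\<lambda>x. scaleC c (T x))" by (rule wN_nonneg[OF N BH_scale[OF T]])
  ultimately show ?thesis using True by simp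
next
  case False
  have e: "(\<lambda>x. scaleC (inverse c) (scaleC c (T x))) = T" using False by (simp add: scaleC_scaleC scaleC_one)
  have "wN N T \<le> cmod (inverse c) * wN N (\<lambda>x. scaleC c (T x))"
    using wN_scale_le[OF N BH_scale[OF T], of "inverse c" c] unfolding e .
  hence "wN N T \<le> wN N (\<lambda>x. scaleC c (T x)) / cmod c" by (simp add: norm_inverse divide_inverse mult.commute)
  hence "cmod c * wN N T \<le> wN N (\<lambda>x. scaleC c (T x))" using False
    by (simp add: pos_le_divide_eq mult.commute)
  thus ?thesis using wN_scale_le[OF N T, of c] by linarith
qed

lemma wN_add:
  fixes S T :: "'a::{complex_inner,complete_space} \<Rightarrow> 'a"
  assumes N: "op_norm_on N" and S: "S \<in> BH" and T: "T \<in> BH"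
  shows "wN N (\<lambda>x. S x + T x) \<le> wN N S + wN N T"
proof (rule wN_le)
  fix \<theta>
  have e: "(\<lambda>x. scaleC (E \<theta>) (S x + T x)) = (\<lambda>x. scaleC (E \<theta>) (S x) + scaleC (E \<theta>) (T x))"
    by (simp add: scaleC_add_right)
  have "hh N (\<lambda>x. S x + T x) \<theta> \<le> hh N S \<theta> + hh N T \<theta>"
    unfolding hh_def e opRe_add[OF BH_scale[OF S] BH_scale[OF T]]
    by (rule N_add[OF N opRe_BH[OF BH_scale[OF S]] opRe_BH[OF BH_scale[OF T]]])
  also have "\<dots> \<le> wN N S + wN N T" by (intro add_mono wN_ge[OF N S] wN_ge[OF N T])
  finally show "hh N (\<lambda>x. S x + T x) \<theta> \<le> wN N S + wN N T" .
qed



lemma real_cs: "a * p + b * q \<le> sqrt (a^2 + b^2) * sqrt (p^2 + (q::real)^2)"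
proof -
  have "(a * p + b * q)^2 \<le> (a^2 + b^2) * (p^2 + q^2)"
  proof -
    have "0 \<le> (a * q - b * p)^2" by simp
    thus ?thesis by (simp add: power2_eq_square algebra_simps)
  qed
  hence "a * p + b * q \<le> sqrt ((a^2 + b^2) * (p^2 + q^2))" by (rule real_le_rsqrt)
  thus ?thesis by (simp add: real_sqrt_mult)
qed

lemma cmod_par: "(cmod (a + b))^2 + (cmod (a - b))^2 = 2 * (cmod a)^2 + 2 * (cmod b)^2"
  unfolding cmod_power2 by (simp add: power2_eq_square algebra_simps)

theorem theorem2p7:
  fixes N :: "('a::{complex_inner, complete_space} \<Rightarrow> 'a) \<Rightarrow> real"
    and B C :: "'a \<Rightarrow> 'a"
  assumes "op_norm_on N" and "B \<in> BH" and "C \<in> BH"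
  shows "1 / sqrt 2 * max (wN N (\<lambda>x. B x + C x)) (wN N (\<lambda>x. B x - C x)) \<le> wNe N B C
     \<and> wNe N B C \<le> 1 / sqrt 2 * sqrt ((wN N (\<lambda>x. B x + C x))\<^sup>2 + (wN N (\<lambda>x. B x - C x))\<^sup>2)"
proof -
  note N = assms(1) and Bb = assms(2) and Cb = assms(3)
  define P where "P = (\<lambda>x. B x + C x)"
  define Q where "Q = (\<lambda>x. B x - C x)"
  have Pb: "P \<in> BH" unfolding P_def by (rule BH_add[OF Bb Cb])
  have Qb: "Q \<in> BH"
  proof -
    have qe: "Q = (\<lambda>x. B x + scaleC (-1) (C x))" by (simp add: Q_def cv.scale_minus_left scaleC_one)
    show ?thesis unfolding qe by (rule BH_add[OF Bb BH_scale[OF Cb]])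
  qed
  define D where "D = {(l1::complex, l2::complex). (cmod l1)\<^sup>2 + (cmod l2)\<^sup>2 \<le> 1}"
  define g where "g = (\<lambda>l. wN N (\<lambda>x. scaleC (fst l) (B x) + scaleC (snd l) (C x)))"
  have wNe_eq: "wNe N B C = (SUP l\<in>D. g l)" unfolding wNe_def wN_def g_def D_def ..
  have gle: "g l \<le> cmod (fst l) * wN N B + cmod (snd l) * wN N C" for l
  proof -
    have "g l \<le> wN N (\<lambda>x. scaleC (fst l) (B x)) + wN N (\<lambda>x. scaleC (snd l) (C x))"
      unfolding g_def by (rule wN_add[OF N BH_scale[OF Bb] BH_scale[OF Cb]])
    thus ?thesis by (simp add: wN_scale[OF N Bb] wN_scale[OF N Cb])
  qed
  have Dne: "D \<noteq> {}" by (auto simp: D_def intro!: exI[of _ 0])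
  have bdd: "bdd_above (g ` D)"
  proof (rule bdd_aboveI2)
    fix l assume l: "l \<in> D"
    obtain l1 l2 where ll: "l = (l1, l2)" by (cases l)
    have s1: "(cmod l1)^2 + (cmod l2)^2 \<le> 1" using l ll by (simp add: D_def)
    have "(cmod l1)^2 \<le> 1" "(cmod l2)^2 \<le> 1"
      using s1 zero_le_power2[of "cmod l1"] zero_le_power2[of "cmod l2"] by linarith+
    hence c1: "cmod l1 \<le> 1" "cmod l2 \<le> 1" by (auto simp: power_le_one_iff abs_square_le_1)
    have "g l \<le> cmod l1 * wN N B + cmod l2 * wN N C" using gle[of l] ll by simp
    also have "\<dots> \<le> 1 * wN N B + 1 * wN N C"
      by (intro add_mono mult_right_mono c1 wN_nonneg[OF N Bb] wN_nonneg[OF N Cb])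
    finally show "g l \<le> wN N B + wN N C" by simp
  qed
  define a where "a = complex_of_real (1 / sqrt 2)"
  have ca: "cmod a = 1 / sqrt 2" unfolding a_def norm_of_real by simp
  have ca2: "(cmod a)^2 = 1 / 2" by (simp add: ca power_divide)
  have inD1: "(a, a) \<in> D" by (simp add: D_def ca2)
  have inD2: "(a, - a) \<in> D" by (simp add: D_def ca2)
  have g1: "g (a, a) = 1 / sqrt 2 * wN N P"
  proof -
    have "(\<lambda>x. scaleC a (B x) + scaleC a (C x)) = (\<lambda>x. scaleC a (P x))" by (simp add: P_def scaleC_add_right)
    thus ?thesis by (simp add: g_def wN_scale[OF N Pb] ca)
  qed
  have g2: "g (a, - a) = 1 / sqrt 2 * wN N Q"
  proof -
    have "(\<lambda>x. scaleC a (B x) + scaleC (- a) (C x)) = (\<lambda>x. scaleC a (Q x))"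
      by (simp add: Q_def cv.scale_right_diff_distrib cv.scale_minus_left)
    thus ?thesis by (simp add: g_def wN_scale[OF N Qb] ca)
  qed
  have low: "1 / sqrt 2 * max (wN N P) (wN N Q) \<le> wNe N B C"
  proof -
    have "g (a, a) \<le> wNe N B C" unfolding wNe_eq by (rule cSUP_upper[OF inD1 bdd])
    moreover have "g (a, - a) \<le> wNe N B C" unfolding wNe_eq by (rule cSUP_upper[OF inD2 bdd])
    ultimately show ?thesis unfolding g1 g2 by (simp add: max_def)
  qed
  have up: "wNe N B C \<le> 1 / sqrt 2 * sqrt ((wN N P)\<^sup>2 + (wN N Q)\<^sup>2)"
    unfolding wNe_eq
  proof (rule cSUP_least[OF Dne])
    fix l assume l: "l \<in> D"
    obtain l1 l2 where ll: "l = (l1, l2)" by (cases l)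
    define m1 where "m1 = (l1 + l2) / 2"
    define m2 where "m2 = (l1 - l2) / 2"
    have e: "(\<lambda>x. scaleC l1 (B x) + scaleC l2 (C x)) = (\<lambda>x. scaleC m1 (P x) + scaleC m2 (Q x))"
    proof
      fix x
      have "l1 = m1 + m2" "l2 = m1 - m2" by (simp_all add: m1_def m2_def field_simps)
      hence "scaleC l1 (B x) + scaleC l2 (C x) = scaleC (m1 + m2) (B x) + scaleC (m1 - m2) (C x)" by simp
      also have "\<dots> = scaleC m1 (B x + C x) + scaleC m2 (B x - C x)"
        by (simp add: cv.scale_left_distrib cv.scale_left_diff_distrib cv.scale_right_distrib cv.scale_right_diff_distrib)
      finally show "scaleC l1 (B x) + scaleC l2 (C x) = scaleC m1 (P x) + scaleC m2 (Q x)" by (simp add: P_def Q_def)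
    qed
    have "g l \<le> wN N (\<lambda>x. scaleC m1 (P x)) + wN N (\<lambda>x. scaleC m2 (Q x))"
      unfolding g_def ll fst_conv snd_conv e by (rule wN_add[OF N BH_scale[OF Pb] BH_scale[OF Qb]])
    also have "\<dots> = cmod m1 * wN N P + cmod m2 * wN N Q" by (simp add: wN_scale[OF N Pb] wN_scale[OF N Qb])
    also have "\<dots> \<le> sqrt ((cmod m1)^2 + (cmod m2)^2) * sqrt ((wN N P)\<^sup>2 + (wN N Q)\<^sup>2)" by (rule real_cs)
    also have "sqrt ((cmod m1)^2 + (cmod m2)^2) \<le> 1 / sqrt 2"
    proof -
      have "(cmod m1)^2 + (cmod m2)^2 = ((cmod l1)^2 + (cmod l2)^2) / 2"
        using cmod_par[of l1 l2] by (simp add: m1_def m2_def norm_divide power_divide)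
      also have "\<dots> \<le> 1 / 2" using l ll by (simp add: D_def)
      finally have "sqrt ((cmod m1)^2 + (cmod m2)^2) \<le> sqrt (1 / 2)" by (rule real_sqrt_le_mono)
      thus ?thesis by (simp add: real_sqrt_divide)
    qed
    hence "sqrt ((cmod m1)^2 + (cmod m2)^2) * sqrt ((wN N P)\<^sup>2 + (wN N Q)\<^sup>2) \<le> 1 / sqrt 2 * sqrt ((wN N P)\<^sup>2 + (wN N Q)\<^sup>2)"
      by (rule mult_right_mono) simp
    finally show "g l \<le> 1 / sqrt 2 * sqrt ((wN N P)\<^sup>2 + (wN N Q)\<^sup>2)" .
  qed
  show ?thesis using low up unfolding P_def Q_def by blast
qed


end
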